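(* Let $m\in\{1,2\}$, $\gamma\in(\gamma_1,3]$ and $z\in(z_2,z_M]$. Then the continuation to the right, $C:[V_8,0)\to(0,\infty)$, of the local real-analytic solution through $P_8$ satisfies $C(V)<\sqrt{-\tfrac32V}$ for all $V\in(V_8,0)$; in particular $C(V)\to0$ as $V\to0^-$.
   Context: Fix $m\in\{1,2\}$. For $z>0$ put $\lambda=1+m\gamma z$, $a_1=1+\frac{m(\gamma-1)}{2}$, $a_2=\frac{m(\gamma-1)+mz\gamma(\gamma-3)}{2}$, $a_3=\frac{mz\gamma(\gamma-1)}{2}$, $G(V,C;\gamma,z)=C^2[(m+1)V+2mz]-V(1+V)(\lambda+V)$, $F(V,C;\gamma,z)=C\{C^2[1+\frac{mz}{1+V}]-a_1(1+V)^2+a_2(1+V)-a_3\}$; ODE $\frac{dC}{dV}=\frac FG$. $z_M=(\sqrt\gamma+\sqrt2)^{-2}$; $w(z)=\sqrt{1-2(\gamma+2)z+(\gamma-2)^2z^2}$, $V_8=\frac{-1+(\gamma-2)z+w}{2}$, $C_8=1+V_8$, $P_8=(V_8,C_8)$. The local solution is the real-analytic solution near $V_8$ with $C(V_8)=C_8$ and $C'(V_8)$ equal to the unique negative root of $-G_Cc^2+(F_C-G_V)c+F_V=0$ (partials at $P_8$); it extends as a positive decreasing solution on $[V_8,0)$. $z_2=\frac{\sqrt{33}-3}{6+2\sqrt{33}+4\gamma}$, $\gamma_1=1+\sqrt2$. *)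

theory Defs
  imports "HOL-Analysis.Analysis"
begin

definition lam :: "real \<Rightarrow> real \<Rightarrow> real \<Rightarrow> real" where
  "lam m g z = 1 + m * g * z"

definition a1 :: "real \<Rightarrow> real \<Rightarrow> real \<Rightarrow> real" where
  "a1 m g z = 1 + m * (g - 1) / 2"

definition a2 :: "real \<Rightarrow> real \<Rightarrow> real \<Rightarrow> real" where
  "a2 m g z = (m * (g - 1) + m * z * g * (g - 3)) / 2"

definition a3 :: "real \<Rightarrow> real \<Rightarrow> real \<Rightarrow> real" where
  "a3 m g z = m * z * g * (g - 1) / 2"

definition Gf :: "real \<Rightarrow> real \<Rightarrow> real \<Rightarrow> real \<Rightarrow> real \<Rightarrow> real" where
  "Gf m g z V C = C^2 * ((m + 1) * V + 2 * m * z) - V * (1 + V) * (lam m g z + V)"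

definition Ff :: "real \<Rightarrow> real \<Rightarrow> real \<Rightarrow> real \<Rightarrow> real \<Rightarrow> real" where
  "Ff m g z V C = C * (C^2 * (1 + m * z / (1 + V)) - a1 m g z * (1 + V)^2
                       + a2 m g z * (1 + V) - a3 m g z)"

definition zM :: "real \<Rightarrow> real" where
  "zM g = 1 / (sqrt g + sqrt 2)^2"

definition wf :: "real \<Rightarrow> real \<Rightarrow> real" where
  "wf g z = sqrt (1 - 2 * (g + 2) * z + (g - 2)^2 * z^2)"

definition V8 :: "real \<Rightarrow> real \<Rightarrow> real" where
  "V8 g z = (-1 + (g - 2) * z + wf g z) / 2"

definition C8 :: "real \<Rightarrow> real \<Rightarrow> real" where
  "C8 g z = 1 + V8 g z"

definition z2 :: "real \<Rightarrow> real" where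
  "z2 g = (sqrt 33 - 3) / (6 + 2 * sqrt 33 + 4 * g)"

definition gamma1 :: real where
  "gamma1 = 1 + sqrt 2"

text \<open>The slope of the local solution at P8: the unique negative root c of
  -G_C c^2 + (F_C - G_V) c + F_V = 0, partial derivatives taken at P8.\<close>
definition slope8 :: "real \<Rightarrow> real \<Rightarrow> real \<Rightarrow> real" where
  "slope8 m g z =
     (let V0 = V8 g z; C0 = C8 g z;
          GV = deriv (\<lambda>v. Gf m g z v C0) V0;
          GC = deriv (\<lambda>c. Gf m g z V0 c) C0;
          FV = deriv (\<lambda>v. Ff m g z v C0) V0;
          FC = deriv (\<lambda>c. Ff m g z V0 c) C0
      in THE c. c < 0 \<and> - GC * c^2 + (FC - GV) * c + FV = 0)"

end

theory Submission
  imports Defs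
begin

lemma barrier:
  fixes f f' :: "real \<Rightarrow> real" and a b :: real
  assumes ab: "a < b"
    and der: "\<And>x. a < x \<Longrightarrow> x < b \<Longrightarrow> (f has_real_derivative f' x) (at x)"
    and zer: "\<And>x. a < x \<Longrightarrow> x < b \<Longrightarrow> f x = 0 \<Longrightarrow> f' x < 0"
    and start: "\<exists>d>0. \<forall>x. a < x \<and> x < a + d \<longrightarrow> f x < 0"
  shows "\<forall>x. a < x \<and> x < b \<longrightarrow> f x < 0"
proof (rule ccontr)
  assume "\<not> ?thesis"
  then obtain x1 where x1: "a < x1" "x1 < b" "f x1 \<ge> 0" by force
  obtain d where d: "d > 0" "\<forall>x. a < x \<and> x < a + d \<longrightarrow> f x < 0" using start by blast
  define x0 where "x0 = a + min d (x1 - a) / 2"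
  have x0: "a < x0" "x0 < x1" "x0 < a + d" using d x1 by (auto simp: x0_def min_def)
  have fx0: "f x0 < 0" using d x0 by auto
  have cont: "continuous_on {x0..x1} f"
    by (rule DERIV_continuous_on[where D = f']) (use der x0 x1 in \<open>auto intro: has_field_derivative_at_within\<close>)
  define S where "S = {x \<in> {x0..x1}. f x = 0}"
  have "\<exists>x\<ge>x0. x \<le> x1 \<and> f x = 0"
    using IVT'[of f x0 0 x1] fx0 x1 x0 cont by auto
  then have Sne: "S \<noteq> {}" by (auto simp: S_def)
  have Scl: "closed S" unfolding S_def by (rule continuous_closed_preimage_constant[OF cont]) simp
  have Sbd: "bdd_below S" unfolding S_def by (rule bdd_belowI[of _ x0]) auto
  define t where "t = Inf S"
  have tS: "t \<in> S" unfolding t_def using closed_contains_Inf[OF Sne Sbd Scl] .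
  then have t: "x0 \<le> t" "t \<le> x1" "f t = 0" by (auto simp: S_def)
  have tne: "t \<noteq> x0" using t fx0 by auto
  have below: "\<forall>y. x0 \<le> y \<and> y < t \<longrightarrow> f y < 0"
  proof (intro allI impI, rule ccontr)
    fix y assume y: "x0 \<le> y \<and> y < t" and ny: "\<not> f y < 0"
    have cy: "continuous_on {x0..y} f" by (rule continuous_on_subset[OF cont]) (use y t in auto)
    have "\<exists>x\<ge>x0. x \<le> y \<and> f x = 0" using IVT'[of f x0 0 y] fx0 ny y cy by auto
    then obtain x where "x0 \<le> x" "x \<le> y" "f x = 0" by blast
    then have "x \<in> S" using y t by (auto simp: S_def)
    then have "t \<le> x" unfolding t_def using Sbd by (rule cInf_lower)
    then show False using \<open>x \<le> y\<close> y by simp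
  qed
  have "f' t < 0" using zer[of t] t x0 x1 by auto
  then obtain e where e: "e > 0" "\<forall>h>0. h < e \<longrightarrow> f t < f (t - h)"
    using DERIV_neg_dec_left[OF der[of t]] t x0 x1 by force
  define h where "h = min e (t - x0) / 2"
  have h: "h > 0" "h < e" "x0 \<le> t - h" using e t tne by (auto simp: h_def min_def field_simps)
  have "f t < f (t - h)" using e h by auto
  moreover have "f (t - h) < 0" using below h by auto
  ultimately show False using t by simp
qed

lemma powser_local:
  fixes a :: "nat \<Rightarrow> real" and C :: "real \<Rightarrow> real"
  assumes e: "e > 0" and s: "\<forall>V. \<bar>V - p\<bar> < e \<longrightarrow> (\<lambda>n. a n * (V - p)^n) sums C V"
  shows "C p = a 0" "(C has_real_derivative a 1) (at p)"
proof -
  have "(\<lambda>n. a n * (p - p)^n) sums C p" by (rule s[rule_format]) (use e in simp)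
  then have "C p = (\<Sum>n. a n * 0^n)" by (simp add: sums_iff)
  then show "C p = a 0" by simp
  define f where "f = (\<lambda>h. \<Sum>n. a n * h^n)"
  have sm: "summable (\<lambda>n. a n * (e/2)^n)"
    using s[rule_format, of "p + e/2"] e by (auto simp: sums_iff)
  have "DERIV f 0 :> (\<Sum>n. diffs a n * 0^n)"
    unfolding f_def by (rule termdiffs_strong[OF sm]) (use e in auto)
  then have df: "DERIV f 0 :> a 1" by (simp add: diffs_def)
  have df': "DERIV f (p - p) :> a 1" using df by simp
  have "DERIV (\<lambda>V. f (V - p)) p :> a 1 * 1"
    by (rule DERIV_chain2[where g="\<lambda>V. V - p", OF df']) (auto intro!: derivative_eq_intros)
  then have d2: "DERIV (\<lambda>V. f (V - p)) p :> a 1" by simp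
  show "(C has_real_derivative a 1) (at p)"
  proof (rule has_field_derivative_transform_within_open[OF d2, of "ball p e"])
    show "open (ball p e)" by simp
    show "p \<in> ball p e" using e by simp
    fix x assume "x \<in> ball p e"
    then have "\<bar>x - p\<bar> < e" by (simp add: dist_real_def abs_minus_commute)
    then show "f (x - p) = C x" using s unfolding f_def by (auto simp: sums_iff)
  qed
qed

lemma radfac:
  fixes a b g z :: real
  assumes "a^2 = g" "b^2 = 2"
  shows "1 - 2*(g+2)*z + (g-2)^2*z^2 = (1 - z*(a+b)^2) * (1 - z*(a-b)^2)"
proof -
  have aa: "a*a = g" "b*b = 2" using assms by (simp_all add: power2_eq_square)
  have e1: "(a+b)^2 + (a-b)^2 = 2*g+4" using aa by (simp add: power2_eq_square algebra_simps)
  have e0: "(a+b)*(a-b) = g - 2" using aa by (simp add: algebra_simps)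
  have e2: "(a+b)^2*(a-b)^2 = (g-2)^2" using e0 by (metis power_mult_distrib)
  have "(1 - z*(a+b)^2) * (1 - z*(a-b)^2) = 1 - z*((a+b)^2 + (a-b)^2) + z^2*((a+b)^2*(a-b)^2)"
    by (simp add: algebra_simps power2_eq_square)
  also have "\<dots> = 1 - 2*(g+2)*z + (g-2)^2*z^2" unfolding e1 e2 by (simp add: algebra_simps)
  finally show ?thesis by simp
qed

lemma relq:
  fixes w g z :: real
  assumes "w^2 = 1 - 2*(g+2)*z + (g-2)^2*z^2"
  shows "((-1+(g-2)*z+w)/2)^2 + (1-(g-2)*z)*((-1+(g-2)*z+w)/2) + 2*z = 0"
proof -
  have "((-1+(g-2)*z+w)/2)^2 + (1-(g-2)*z)*((-1+(g-2)*z+w)/2) + 2*z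
        = (w^2 - (1 - 2*(g+2)*z + (g-2)^2*z^2))/4"
    by (simp add: field_simps power2_eq_square)
  then show ?thesis using assms by simp
qed

lemma params:
  fixes g z :: real
  assumes hg: "gamma1 < g" "g \<le> 3" and hz: "z2 g < z" "z \<le> zM g"
  shows "12/5 < g" "0 < z" "z < 3/25"
    "(V8 g z)^2 + (1 - (g-2)*z) * V8 g z + 2*z = 0"
    "-1/2 < V8 g z" "2*(V8 g z)^2 + 7*V8 g z + 2 < 0" "V8 g z < -3/10"
proof -
  have s2: "7/5 < sqrt (2::real)" by (rule real_less_rsqrt) (simp add: power2_eq_square)
  show g1: "12/5 < g" using hg s2 unfolding gamma1_def by simp
  have sg: "3/2 < sqrt g" by (rule real_less_rsqrt) (use g1 in \<open>simp add: power2_eq_square\<close>)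
  have s33a: "57/10 < sqrt (33::real)" by (rule real_less_rsqrt) (simp add: power2_eq_square)
  have s33b: "sqrt (33::real) < 23/4"
  proof -
    have "sqrt (33::real) < sqrt ((23/4)^2)" by (rule real_sqrt_less_mono) (simp add: power2_eq_square)
    then show ?thesis by simp
  qed
  have s33sq: "(sqrt 33::real)^2 = 33" by simp
  have sgsq: "(sqrt g)^2 = g" using g1 by simp
  have s2sq: "(sqrt 2::real)^2 = 2" by simp
  have z2pos: "z2 g > 0" unfolding z2_def using s33a g1 by (intro divide_pos_pos) auto
  show zpos: "0 < z" using z2pos hz by simp
  have sum: "29/10 < sqrt g + sqrt 2" using sg s2 by simp
  have sumsq0: "(29/10)^2 < (sqrt g + sqrt 2)^2"
    by (rule power_strict_mono) (use sum in auto)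
  then have sumsq: "841/100 < (sqrt g + sqrt 2)^2" by (simp add: power2_eq_square)
  have zMb: "zM g < 3/25"
  proof -
    have "zM g = 1 / (sqrt g + sqrt 2)^2" by (simp add: zM_def)
    also have "\<dots> < 1 / (841/100)" by (rule divide_strict_left_mono) (use sumsq sum in \<open>auto intro!: mult_pos_pos\<close>)
    also have "\<dots> < 3/25" by simp
    finally show ?thesis .
  qed
  show "z < 3/25" using zMb hz by simp
  define A where "A = (sqrt g + sqrt 2)^2"
  define B where "B = (sqrt g - sqrt 2)^2"
  have Apos: "A > 0" unfolding A_def using sum by simp
  have zA: "z * A \<le> 1" using hz Apos by (simp add: zM_def A_def field_simps)
  have sgs2: "0 \<le> sqrt g * sqrt 2" using g1 by simp
  have BA: "B \<le> A" unfolding A_def B_def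
    using sgs2 by (simp add: power2_eq_square algebra_simps)
  have zB: "z * B \<le> 1" using zA BA zpos by (meson mult_left_mono order_trans less_imp_le)
  have radeq: "1 - 2*(g+2)*z + (g-2)^2*z^2 = (1 - z*A) * (1 - z*B)"
    unfolding A_def B_def by (rule radfac[OF sgsq s2sq])
  have "(1 - z*A)*(1 - z*B) \<ge> 0" using zA zB by simp
  then have rad: "1 - 2*(g+2)*z + (g-2)^2*z^2 \<ge> 0" by (simp only: radeq)
  define w where "w = wf g z"
  have w0: "w \<ge> 0" unfolding w_def wf_def using rad by simp
  have wsq: "w^2 = 1 - 2*(g+2)*z + (g-2)^2*z^2" unfolding w_def wf_def by (rule real_sqrt_pow2[OF rad])
  define p where "p = V8 g z"
  have pdef: "p = (-1 + (g-2)*z + w)/2" unfolding p_def V8_def w_def by simp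
  show rel: "(V8 g z)^2 + (1 - (g-2)*z) * V8 g z + 2*z = 0"
    unfolding p_def[symmetric] pdef using wsq by (rule relq)
  have gz: "(g-2)*z > 0" using zpos g1 by simp
  show pl: "-1/2 < V8 g z" unfolding p_def[symmetric] pdef using w0 gz by simp
  define rr where "rr = sqrt (33::real)"
  have ssq: "rr^2 = 33" unfolding rr_def by simp
  define a where "a = (rr - 5)/2"
  define k where "k = 2*(g+2) - 2*a*(g-2)"
  have sg2: "(rr - 5)*(g-2) \<le> (3/4)*(g-2)" using s33b g1 unfolding rr_def by (intro mult_right_mono) auto
  have kpos: "k > 0" unfolding k_def a_def using sg2 g1 by (simp add: algebra_simps)
  have z2eq: "z2 g * k = 1 - a^2"
  proof -
    have d: "6 + 2*rr + 4*g > 0" using s33a g1 unfolding rr_def by simp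
    have "(1 - a^2) * (6 + 2*rr + 4*g) - (rr - 3) * k = (rr^2 - 33)*(3 - rr)/2"
      unfolding a_def k_def by (simp add: field_simps power2_eq_square power3_eq_cube; simp add: algebra_simps)
    then have "(1 - a^2) * (6 + 2*rr + 4*g) = (rr - 3) * k" using ssq by simp
    then show ?thesis unfolding z2_def rr_def[symmetric] using d by (simp add: field_simps)
  qed
  have zk: "z * k > 1 - a^2" using hz kpos z2eq by (metis mult_strict_right_mono)
  define R where "R = a - (g-2)*z"
  have R0: "R > 0" unfolding R_def a_def rr_def using s33a \<open>z < 3/25\<close> hg zpos
  proof -
    have "(g-2)*z \<le> 1 * (3/25)" using hg g1 zpos \<open>z < 3/25\<close> by (intro mult_mono) auto
    then show "(sqrt 33 - 5) / 2 - (g - 2) * z > 0" using s33a by simp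
  qed
  have "w^2 < R^2" unfolding wsq R_def using zk by (simp add: k_def power2_eq_square algebra_simps)
  then have wR: "w < R" by (rule power_less_imp_less_base) (use R0 in simp)
  have pr1: "p < (rr - 7)/4"
  proof -
    define kk where "kk = (g-2)*z"
    have "w < (rr - 5)/2 - kk" "p = (-1 + kk + w)/2" using wR pdef unfolding R_def a_def kk_def by auto
    then show ?thesis by (simp add: field_simps)
  qed
  have pr2: "p > (-7 - rr)/4" using pl s33a unfolding p_def[symmetric] rr_def by simp
  have "2*p^2 + 7*p + 2 - 2*((p - (rr-7)/4)*(p - (-7-rr)/4)) = (rr^2 - 33)/8"
    by (simp add: field_simps power2_eq_square; simp add: algebra_simps)
  then have fac: "2*p^2 + 7*p + 2 = 2*((p - (rr-7)/4)*(p - (-7-rr)/4))" using ssq by simp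
  have n1: "p - (rr-7)/4 < 0" using pr1 by simp
  have n2: "p - (-7-rr)/4 > 0" using pr2 by simp
  have "(p - (rr-7)/4)*(p - (-7-rr)/4) < 0" using mult_neg_pos[OF n1 n2] .
  then have "2*((p - (rr-7)/4)*(p - (-7-rr)/4)) < 0" by simp
  then show "2*(V8 g z)^2 + 7*V8 g z + 2 < 0" using fac unfolding p_def by linarith
  show "V8 g z < -3/10" using pr1 s33b unfolding p_def rr_def by (simp add: field_simps)
qed

lemma quad_neg_root:
  fixes A B C0 :: real
  assumes A: "A > 0" and C0: "C0 < 0"
  shows "\<exists>!c. c < 0 \<and> - (-A) * c^2 + B * c + C0 = 0"
proof -
  define D where "D = B^2 - 4*A*C0"
  have Dp: "D > B^2" unfolding D_def using A C0 by (simp add: mult_pos_neg)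
  define s where "s = sqrt D"
  have D0: "D \<ge> 0" using Dp zero_le_power2[of B] by linarith
  have s2: "s^2 = D" unfolding s_def using D0 by simp
  have sB: "s > \<bar>B\<bar>" unfolding s_def using Dp
    by (metis abs_ge_zero real_sqrt_abs real_sqrt_less_mono)
  define c0 where "c0 = (-B - s)/(2*A)"
  have c0neg: "c0 < 0" unfolding c0_def using sB A by (simp add: divide_neg_pos)
  have c0root: "A * c0^2 + B * c0 + C0 = 0"
  proof -
    have "A * c0^2 + B * c0 + C0 = (s^2 - B^2 + 4*A*C0)/(4*A)"
      unfolding c0_def using A by (simp add: field_simps power2_eq_square; simp add: algebra_simps)
    then show ?thesis using s2 unfolding D_def by simp
  qed
  show ?thesis
  proof (rule ex1I[of _ c0])
    show "c0 < 0 \<and> - (-A) * c0^2 + B * c0 + C0 = 0" using c0neg c0root by simp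
  next
    fix c assume c: "c < 0 \<and> - (-A) * c^2 + B * c + C0 = 0"
    show "c = c0"
    proof (rule ccontr)
      assume ne: "c \<noteq> c0"
      have e1: "A * c^2 + B * c + C0 = 0" using c by simp
      have "(c - c0) * (A * (c + c0) + B) = 0" using e1 c0root
        by (simp add: algebra_simps power2_eq_square)
      then have e2: "A * (c + c0) + B = 0" using ne by simp
      have "A * c * c0 = C0"
      proof -
        have "A * c^2 + B * c = c * (A*c + B)" by (simp add: algebra_simps power2_eq_square)
        also have "A*c + B = - A * c0" using e2 by (simp add: algebra_simps)
        finally show ?thesis using e1 by (simp add: algebra_simps)
      qed
      moreover have "A * c * c0 > 0"
      proof -
        have "c * c0 > 0" using c c0neg by (simp add: mult_neg_neg)
        then show ?thesis using A by (simp add: mult.assoc)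
      qed
      ultimately show False using C0 by simp
    qed
  qed
qed

lemma slope_neg:
  fixes m g z :: real
  assumes m: "1 \<le> m" "m \<le> 2" and g: "12/5 < g" "g \<le> 3" and z: "0 < z" "z < 3/25"
    and p: "-1/2 < V8 g z" "V8 g z < -3/10"
  shows "slope8 m g z < 0"
proof -
  define p where "p = V8 g z"
  define c0 where "c0 = C8 g z"
  have pl: "-1/2 < p" and ph: "p < -3/10" using p unfolding p_def by auto
  have c0: "c0 = 1 + p" unfolding c0_def p_def C8_def by simp
  have c0pos: "c0 > 0" using c0 p unfolding p_def by simp
  have dGC: "((\<lambda>c. Gf m g z p c) has_real_derivative 2*c0*((m+1)*p+2*m*z)) (at c0)"
    unfolding Gf_def by (auto intro!: derivative_eq_intros)
  have dFV: "((\<lambda>v. Ff m g z v c0) has_real_derivative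
      c0*(c0^2*(-(m*z)/(1+p)^2) - 2*a1 m g z*(1+p) + a2 m g z)) (at p)"
    unfolding Ff_def using p unfolding p_def[symmetric]
    by (auto intro!: derivative_eq_intros simp: field_simps power2_eq_square)
  define GC where "GC = deriv (\<lambda>c. Gf m g z p c) c0"
  define FV where "FV = deriv (\<lambda>v. Ff m g z v c0) p"
  have GCv: "GC = 2*c0*((m+1)*p+2*m*z)" unfolding GC_def by (rule DERIV_imp_deriv[OF dGC])
  have FVv: "FV = c0*(c0^2*(-(m*z)/(1+p)^2) - 2*a1 m g z*(1+p) + a2 m g z)"
    unfolding FV_def by (rule DERIV_imp_deriv[OF dFV])
  have D8: "(m+1)*p+2*m*z < 0"
  proof -
    have h1: "(m+1)*p \<le> 2*p" using m ph by (intro mult_right_mono_neg) auto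
    have h2: "2*m*z < 2*2*(3/25)" using m z by (intro mult_le_less_imp_less) auto
    show ?thesis using h1 h2 ph by linarith
  qed
  have GCneg: "GC < 0" unfolding GCv using c0pos D8 by (simp add: mult_pos_neg)
  have inner: "c0^2*(-(m*z)/(1+p)^2) - 2*a1 m g z*(1+p) + a2 m g z < 0"
  proof -
    have e: "c0^2*(-(m*z)/(1+p)^2) = -(m*z)" using c0 c0pos by (simp add: field_simps)
    have mg: "m*(g-1) > 0" using m g by simp
    have a1p: "a1 m g z > 0" unfolding a1_def using mg by simp
    have "2*a1 m g z*(1+p) \<ge> a1 m g z" using a1p pl by simp
    moreover have "a2 m g z < a1 m g z"
    proof -
      have "m*z*g*(g-3) \<le> 0" using m z g by (simp add: mult_nonneg_nonpos)
      then show ?thesis unfolding a1_def a2_def by (simp add: field_simps)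
    qed
    moreover have "m*z > 0" using m z by simp
    ultimately show ?thesis using e by linarith
  qed
  have FVneg: "FV < 0" unfolding FVv using c0pos inner by (simp add: mult_pos_neg)
  have ex: "\<exists>!c. c < 0 \<and> - GC * c^2 + (deriv (\<lambda>c. Ff m g z p c) c0 - deriv (\<lambda>v. Gf m g z v c0) p) * c + FV = 0"
    using quad_neg_root[of "-GC" FV "deriv (\<lambda>c. Ff m g z p c) c0 - deriv (\<lambda>v. Gf m g z v c0) p"] GCneg FVneg
    by simp
  have "slope8 m g z = (THE c. c < 0 \<and> - GC * c^2 + (deriv (\<lambda>c. Ff m g z p c) c0 - deriv (\<lambda>v. Gf m g z v c0) p) * c + FV = 0)"
    unfolding slope8_def Let_def GC_def FV_def p_def c0_def ..
  with theI'[OF ex] show ?thesis by simp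
qed

definition Pp :: "real \<Rightarrow> real \<Rightarrow> real \<Rightarrow> real \<Rightarrow> real" where
  "Pp m g z V = a1 m g z * (1+V)^2 - a2 m g z * (1+V) + a3 m g z"
definition Psi :: "real \<Rightarrow> real \<Rightarrow> real \<Rightarrow> real \<Rightarrow> real" where
  "Psi m g z V = Pp m g z V * (1 - m*z/(1+V+m*z))"
definition Psid :: "real \<Rightarrow> real \<Rightarrow> real \<Rightarrow> real \<Rightarrow> real" where
  "Psid m g z V = Pp m g z V*(m*z/(1+V+m*z)^2) + (2*a1 m g z*(1+V) - a2 m g z)*(1 - m*z/(1+V+m*z))"
definition qf :: "real \<Rightarrow> real \<Rightarrow> real \<Rightarrow> real \<Rightarrow> real" where
  "qf m g z V = 3*(-3/2*V*(1+V+m*z) - (1+V)*Pp m g z V)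
      + 3/2*(3/2*((m+1)*V+2*m*z) + (1+V)*(lam m g z+V))*(1+V)"

lemma ab1: "(a::real) \<noteq> 0 \<Longrightarrow> b \<noteq> 0 \<Longrightarrow> a/b*(b/a) = 1" by simp

lemma rearr: "(c::real)*X*(c2 - P*Y) = c*(c2*X) - c*P*(X*Y)" by (simp add: algebra_simps)

lemma I1:
  assumes "1+V > 0" "1+V+m*z > 0"
  shows "Ff m g z V c = c * ((1+V+m*z)/(1+V)) * (c^2 - Psi m g z V)"
proof -
  have e1: "1 - m*z/(1+V+m*z) = (1+V)/(1+V+m*z)" using assms by (simp add: field_simps)
  have e2: "1 + m*z/(1+V) = (1+V+m*z)/(1+V)" using assms by (simp add: field_simps)
  have "Ff m g z V c = c * (c^2 * ((1+V+m*z)/(1+V)) - Pp m g z V)"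
    unfolding Ff_def Pp_def e2[symmetric] by (simp add: algebra_simps)
  also have "\<dots> = c * ((1+V+m*z)/(1+V)) * (c^2 - Pp m g z V * ((1+V)/(1+V+m*z)))"
  proof -
    have one: "((1+V+m*z)/(1+V)) * ((1+V)/(1+V+m*z)) = 1" by (rule ab1) (use assms in auto)
    have "c * ((1+V+m*z)/(1+V)) * (c^2 - Pp m g z V * ((1+V)/(1+V+m*z)))
        = c * (c^2 * ((1+V+m*z)/(1+V))) - c * Pp m g z V * (((1+V+m*z)/(1+V)) * ((1+V)/(1+V+m*z)))"
      by (rule rearr)
    then show ?thesis unfolding one by (simp add: algebra_simps)
  qed
  finally show ?thesis unfolding Psi_def e1 .
qed

lemma I2:
  assumes "1+V > 0" "c^2 = -3/2*V"
  shows "(1+V)*(2*c*Ff m g z V c + 3/2*Gf m g z V c) = -V * qf m g z V"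
proof -
  have cc: "c*c = -3/2*V" using assms by (simp add: power2_eq_square)
  have "(1+V)*(2*c*Ff m g z V c + 3/2*Gf m g z V c)
     = (1+V)*(2*(c*c)*((c*c)*(1 + m*z/(1+V)) - Pp m g z V) + 3/2*((c*c)*((m+1)*V+2*m*z) - V*(1+V)*(lam m g z+V)))"
    unfolding Ff_def Gf_def Pp_def by (simp add: power2_eq_square algebra_simps)
  also have "\<dots> = -V * qf m g z V"
    unfolding cc qf_def using assms(1) by (simp add: field_simps; simp add: algebra_simps power2_eq_square)
  finally show ?thesis .
qed

lemma I3:
  fixes p :: real
  assumes rel: "p^2 + (1 - (g-2)*z)*p + 2*z = 0" and "1+p > 0" "1+p+m*z > 0"
  shows "Psi m g z p = (1+p)^2"
proof -
  have "Pp m g z p * (1+p) - (1+p)^2*(1+p+m*z) = m*(g-1)/2*(1+p)*(p^2 + (1 - (g-2)*z)*p + 2*z)"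
    unfolding Pp_def a1_def a2_def a3_def by (simp add: field_simps power2_eq_square; simp add: algebra_simps)
  then have e: "Pp m g z p * (1+p) = (1+p)^2*(1+p+m*z)" using rel by simp
  show ?thesis unfolding Psi_def using assms(2,3) e
    by (simp add: field_simps power2_eq_square)
qed

lemma dPsi:
  assumes "1+V+m*z > 0"
  shows "(Psi m g z has_real_derivative Psid m g z V) (at V)"
proof -
  have d1: "((\<lambda>V. Pp m g z V) has_real_derivative (2*a1 m g z*(1+V) - a2 m g z)) (at V)"
    unfolding Pp_def by (auto intro!: derivative_eq_intros simp: algebra_simps)
  have d2: "((\<lambda>V. 1 - m*z/(1+V+m*z)) has_real_derivative m*z/(1+V+m*z)^2) (at V)"
    using assms by (auto intro!: derivative_eq_intros simp: field_simps power2_eq_square)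
  have "((\<lambda>V. Pp m g z V * (1 - m*z/(1+V+m*z))) has_real_derivative
     Pp m g z V * (m*z/(1+V+m*z)^2) + (2*a1 m g z*(1+V) - a2 m g z) * (1 - m*z/(1+V+m*z))) (at V)"
    by (rule DERIV_mult'[OF d1 d2])
  then show ?thesis unfolding Psi_def[abs_def] Psid_def .
qed

lemma Qneg1:
  fixes p g :: real
  assumes "(-1/2) \<le> p" and "p \<le> (-3/10)" and "(12/5) \<le> g" and "g \<le> (3)"
  shows "((-1/6) + (1/9) * g + (-17/18) * g * p + (10/9) * g * p^2 + (31/9) * g * p^3 + (20/9) * g * p^4 + (4/9) * g * p^5 + (1/9) * g^2 * p + (-2/9) * g^2 * p^2 + (-1) * g^2 * p^3 + (-8/9) * g^2 * p^4 + (-2/9) * g^2 * p^5 + (-1/2) * p + (-1) * p^2 + (-2/3) * p^3) > 0"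
proof -
  define x where "x = p - (-1/2)"
  define y where "y = g - (12/5)"
  have x0: "0 \<le> x" and x1: "x \<le> (1/5)" using assms unfolding x_def by auto
  have y0: "0 \<le> y" and y1: "y \<le> (3/5)" using assms unfolding y_def by auto
  have f1: "x \<le> (1/5)"
  proof -
    have "x \<le> (1/5)" using x0 x1 y0 y1 by simp
    then show ?thesis by (simp add: power_divide)
  qed
  have f2: "x * y \<le> (3/25)"
  proof -
    have "x * y \<le> (1/5)*(3/5)" using x0 x1 y0 y1 by (intro mult_mono power_mono) simp_all
    then show ?thesis by (simp add: power_divide)
  qed
  have f3: "x * y^2 \<le> (9/125)"
  proof -
    have "x * y^2 \<le> (1/5)*(3/5)^2" using x0 x1 y0 y1 by (intro mult_mono power_mono) simp_all
    then show ?thesis by (simp add: power_divide)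
  qed
  have f4: "x^2 \<le> (1/25)"
  proof -
    have "x^2 \<le> (1/5)^2" using x0 x1 y0 y1 by (intro mult_mono power_mono) simp_all
    then show ?thesis by (simp add: power_divide)
  qed
  have f5: "x^2 * y \<le> (3/125)"
  proof -
    have "x^2 * y \<le> (1/5)^2*(3/5)" using x0 x1 y0 y1 by (intro mult_mono power_mono) simp_all
    then show ?thesis by (simp add: power_divide)
  qed
  have f6: "0 \<le> x^2 * y^2" using x0 y0 by simp
  have f7: "0 \<le> x^3" using x0 y0 by simp
  have f8: "0 \<le> x^3 * y" using x0 y0 by simp
  have f9: "0 \<le> x^3 * y^2" using x0 y0 by simp
  have f10: "0 \<le> x^4" using x0 y0 by simp
  have f11: "x^4 * y \<le> (3/3125)"
  proof -
    have "x^4 * y \<le> (1/5)^4*(3/5)" using x0 x1 y0 y1 by (intro mult_mono power_mono) simp_all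
    then show ?thesis by (simp add: power_divide)
  qed
  have f12: "x^4 * y^2 \<le> (9/15625)"
  proof -
    have "x^4 * y^2 \<le> (1/5)^4*(3/5)^2" using x0 x1 y0 y1 by (intro mult_mono power_mono) simp_all
    then show ?thesis by (simp add: power_divide)
  qed
  have f13: "x^5 \<le> (1/3125)"
  proof -
    have "x^5 \<le> (1/5)^5" using x0 x1 y0 y1 by (intro mult_mono power_mono) simp_all
    then show ?thesis by (simp add: power_divide)
  qed
  have f14: "x^5 * y \<le> (3/15625)"
  proof -
    have "x^5 * y \<le> (1/5)^5*(3/5)" using x0 x1 y0 y1 by (intro mult_mono power_mono) simp_all
    then show ?thesis by (simp add: power_divide)
  qed
  have f15: "x^5 * y^2 \<le> (9/78125)"
  proof -
    have "x^5 * y^2 \<le> (1/5)^5*(3/5)^2" using x0 x1 y0 y1 by (intro mult_mono power_mono) simp_all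
    then show ?thesis by (simp add: power_divide)
  qed
  have f16: "0 \<le> y" using x0 y0 by simp
  have f17: "y^2 \<le> (9/25)"
  proof -
    have "y^2 \<le> (3/5)^2" using x0 x1 y0 y1 by (intro mult_mono power_mono) simp_all
    then show ?thesis by (simp add: power_divide)
  qed
  have eq: "((-1/6) + (1/9) * g + (-17/18) * g * p + (10/9) * g * p^2 + (31/9) * g * p^3 + (20/9) * g * p^4 + (4/9) * g * p^5 + (1/9) * g^2 * p + (-2/9) * g^2 * p^2 + (-1) * g^2 * p^3 + (-8/9) * g^2 * p^4 + (-2/9) * g^2 * p^5 + (-1/2) * p + (-1) * p^2 + (-2/3) * p^3) = ((21/20) + (-98/75) * x + (-29/45) * x * y + (-1/24) * x * y^2 + (-134/75) * x^2 + (-19/90) * x^2 * y + (2/9) * x^2 * y^2 + (22/25) * x^3 + (53/45) * x^3 * y + (2/9) * x^3 * y^2 + (56/75) * x^4 + (-22/45) * x^4 * y + (-1/3) * x^4 * y^2 + (-16/75) * x^5 + (-28/45) * x^5 * y + (-2/9) * x^5 * y^2 + (7/18) * y + (-5/144) * y^2)"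
    unfolding x_def y_def by algebra
  show ?thesis unfolding eq using f1 f2 f3 f4 f5 f6 f7 f8 f9 f10 f11 f12 f13 f14 f15 f16 f17 by linarith
qed

lemma dqneg1_p0:
  fixes V g z :: real
  assumes "(-33/100) \<le> V" and "V \<le> (-33/200)" and "(12/5) \<le> g" and "g \<le> (3)" and "(0) \<le> z" and "z \<le> (3/25)"
  shows "((3) + (3) * V + (6) * V * g + (6) * V * g * z + (-3) * V * g^2 * z + (9/2) * V^2 * g + (3/2) * g + (9/2) * g * z + (-3/2) * g^2 * z) > 0"
proof -
  define vv where "vv = V - (-33/100)"
  define yy where "yy = g - (12/5)"
  define tt where "tt = z - (0)"
  have vv0: "0 \<le> vv" and vv1: "vv \<le> (33/200)" using assms unfolding vv_def by auto
  have yy0: "0 \<le> yy" and yy1: "yy \<le> (3/5)" using assms unfolding yy_def by auto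
  have tt0: "0 \<le> tt" and tt1: "tt \<le> (3/25)" using assms unfolding tt_def by auto
  have f1: "0 \<le> tt" using vv0 yy0 tt0 by simp
  have f2: "tt * vv \<le> (99/5000)"
  proof -
    have "tt * vv \<le> (3/25)*(33/200)" using vv0 vv1 yy0 yy1 tt0 tt1 by (intro mult_mono power_mono) simp_all
    then show ?thesis by (simp add: power_divide)
  qed
  have f3: "tt * vv * yy \<le> (297/25000)"
  proof -
    have "tt * vv * yy \<le> (3/25)*(33/200)*(3/5)" using vv0 vv1 yy0 yy1 tt0 tt1 by (intro mult_mono power_mono) simp_all
    then show ?thesis by (simp add: power_divide)
  qed
  have f4: "tt * vv * yy^2 \<le> (891/125000)"
  proof -
    have "tt * vv * yy^2 \<le> (3/25)*(33/200)*(3/5)^2" using vv0 vv1 yy0 yy1 tt0 tt1 by (intro mult_mono power_mono) simp_all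
    then show ?thesis by (simp add: power_divide)
  qed
  have f5: "0 \<le> tt * yy" using vv0 yy0 tt0 by simp
  have f6: "tt * yy^2 \<le> (27/625)"
  proof -
    have "tt * yy^2 \<le> (3/25)*(3/5)^2" using vv0 vv1 yy0 yy1 tt0 tt1 by (intro mult_mono power_mono) simp_all
    then show ?thesis by (simp add: power_divide)
  qed
  have f7: "0 \<le> vv" using vv0 yy0 tt0 by simp
  have f8: "0 \<le> vv * yy" using vv0 yy0 tt0 by simp
  have f9: "0 \<le> vv^2" using vv0 yy0 tt0 by simp
  have f10: "0 \<le> vv^2 * yy" using vv0 yy0 tt0 by simp
  have f11: "0 \<le> yy" using vv0 yy0 tt0 by simp
  have eq: "((3) + (3) * V + (6) * V * g + (6) * V * g * z + (-3) * V * g^2 * z + (9/2) * V^2 * g + (3/2) * g + (9/2) * g * z + (-3/2) * g^2 * z) = ((50853/25000) + (1944/625) * tt + (-72/25) * tt * vv + (-42/5) * tt * vv * yy + (-3) * tt * vv * yy^2 + (9/125) * tt * yy + (-51/100) * tt * yy^2 + (1284/125) * vv + (303/100) * vv * yy + (54/5) * vv^2 + (9/2) * vv^2 * yy + (201/20000) * yy)"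
    unfolding vv_def yy_def tt_def by algebra
  show ?thesis unfolding eq using f1 f2 f3 f4 f5 f6 f7 f8 f9 f10 f11 by linarith
qed

lemma dqneg1_p1:
  fixes V g z :: real
  assumes "(-33/200) \<le> V" and "V \<le> (0)" and "(12/5) \<le> g" and "g \<le> (3)" and "(0) \<le> z" and "z \<le> (3/25)"
  shows "((3) + (3) * V + (6) * V * g + (6) * V * g * z + (-3) * V * g^2 * z + (9/2) * V^2 * g + (3/2) * g + (9/2) * g * z + (-3/2) * g^2 * z) > 0"
proof -
  define vv where "vv = V - (-33/200)"
  define yy where "yy = g - (12/5)"
  define tt where "tt = z - (0)"
  have vv0: "0 \<le> vv" and vv1: "vv \<le> (33/200)" using assms unfolding vv_def by auto
  have yy0: "0 \<le> yy" and yy1: "yy \<le> (3/5)" using assms unfolding yy_def by auto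
  have tt0: "0 \<le> tt" and tt1: "tt \<le> (3/25)" using assms unfolding tt_def by auto
  have f1: "0 \<le> tt" using vv0 yy0 tt0 by simp
  have f2: "tt * vv \<le> (99/5000)"
  proof -
    have "tt * vv \<le> (3/25)*(33/200)" using vv0 vv1 yy0 yy1 tt0 tt1 by (intro mult_mono power_mono) simp_all
    then show ?thesis by (simp add: power_divide)
  qed
  have f3: "tt * vv * yy \<le> (297/25000)"
  proof -
    have "tt * vv * yy \<le> (3/25)*(33/200)*(3/5)" using vv0 vv1 yy0 yy1 tt0 tt1 by (intro mult_mono power_mono) simp_all
    then show ?thesis by (simp add: power_divide)
  qed
  have f4: "tt * vv * yy^2 \<le> (891/125000)"
  proof -
    have "tt * vv * yy^2 \<le> (3/25)*(33/200)*(3/5)^2" using vv0 vv1 yy0 yy1 tt0 tt1 by (intro mult_mono power_mono) simp_all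
    then show ?thesis by (simp add: power_divide)
  qed
  have f5: "tt * yy \<le> (9/125)"
  proof -
    have "tt * yy \<le> (3/25)*(3/5)" using vv0 vv1 yy0 yy1 tt0 tt1 by (intro mult_mono power_mono) simp_all
    then show ?thesis by (simp add: power_divide)
  qed
  have f6: "tt * yy^2 \<le> (27/625)"
  proof -
    have "tt * yy^2 \<le> (3/25)*(3/5)^2" using vv0 vv1 yy0 yy1 tt0 tt1 by (intro mult_mono power_mono) simp_all
    then show ?thesis by (simp add: power_divide)
  qed
  have f7: "0 \<le> vv" using vv0 yy0 tt0 by simp
  have f8: "0 \<le> vv * yy" using vv0 yy0 tt0 by simp
  have f9: "0 \<le> vv^2" using vv0 yy0 tt0 by simp
  have f10: "0 \<le> vv^2 * yy" using vv0 yy0 tt0 by simp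
  have f11: "0 \<le> yy" using vv0 yy0 tt0 by simp
  have eq: "((3) + (3) * V + (6) * V * g + (6) * V * g * z + (-3) * V * g^2 * z + (9/2) * V^2 * g + (3/2) * g + (9/2) * g * z + (-3/2) * g^2 * z) = ((402303/100000) + (1647/625) * tt + (-72/25) * tt * vv + (-42/5) * tt * vv * yy + (-3) * tt * vv * yy^2 + (-657/500) * tt * yy + (-201/200) * tt * yy^2 + (3459/250) * vv + (903/200) * vv * yy + (54/5) * vv^2 + (9/2) * vv^2 * yy + (50601/80000) * yy)"
    unfolding vv_def yy_def tt_def by algebra
  show ?thesis unfolding eq using f1 f2 f3 f4 f5 f6 f7 f8 f9 f10 f11 by linarith
qed

lemma dqneg1:
  fixes V g z :: real
  assumes "(-33/100) \<le> V" and "V \<le> (0)" and "(12/5) \<le> g" and "g \<le> (3)" and "(0) \<le> z" and "z \<le> (3/25)"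
  shows "((3) + (3) * V + (6) * V * g + (6) * V * g * z + (-3) * V * g^2 * z + (9/2) * V^2 * g + (3/2) * g + (9/2) * g * z + (-3/2) * g^2 * z) > 0"
proof -
  consider "(-33/100) \<le> V \<and> V \<le> (-33/200)" | "(-33/200) \<le> V \<and> V \<le> (0)" using assms(1,2) by linarith
  then show ?thesis
  proof cases
    case 1 then show ?thesis using dqneg1_p0 assms by auto
  next
    case 2 then show ?thesis using dqneg1_p1 assms by auto
  qed
qed

lemma qf1: "qf 1 g z V = ((-3/2) + (-3) * V + (-3/2) * V * g + (-9/2) * V * g * z + (3/2) * V * g^2 * z + (-3/2) * V^2 + (-3) * V^2 * g + (-3) * V^2 * g * z + (3/2) * V^2 * g^2 * z + (-3/2) * V^3 * g + (-3/2) * g * z + (9/2) * z)"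
  unfolding qf_def Pp_def lam_def a1_def a2_def a3_def
  by (simp add: field_simps power2_eq_square power3_eq_cube; simp add: algebra_simps)

lemma dqf1: "((\<lambda>V. qf 1 g z V) has_real_derivative ((-3) + (-3) * V + (-6) * V * g + (-6) * V * g * z + (3) * V * g^2 * z + (-9/2) * V^2 * g + (-3/2) * g + (-9/2) * g * z + (3/2) * g^2 * z)) (at V)"
  unfolding qf1 by (auto intro!: derivative_eq_intros simp: field_simps power2_eq_square power3_eq_cube)

lemma Tid1:
  fixes p g z :: real
  shows "((g-2)*p-2) * qf 1 g z (-(2/3)*(1+p)^2) - (2*p^2+7*p+2)*((1/6) + (-1/9) * g + (17/18) * g * p + (-10/9) * g * p^2 + (-31/9) * g * p^3 + (-20/9) * g * p^4 + (-4/9) * g * p^5 + (-1/9) * g^2 * p + (2/9) * g^2 * p^2 + (1) * g^2 * p^3 + (8/9) * g^2 * p^4 + (2/9) * g^2 * p^5 + (1/2) * p + (1) * p^2 + (2/3) * p^3)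
     = (z*((g-2)*p-2) - p*(1+p)) * ((9/2) + (1/6) * g + (2/3) * g * p + (-5) * g * p^2 + (-16/3) * g * p^3 + (-4/3) * g * p^4 + (-1/3) * g^2 + (2/3) * g^2 * p + (3) * g^2 * p^2 + (8/3) * g^2 * p^3 + (2/3) * g^2 * p^4)"
  unfolding qf1 by algebra

lemma Qneg2:
  fixes p g :: real
  assumes "(-1/2) \<le> p" and "p \<le> (-3/10)" and "(12/5) \<le> g" and "g \<le> (3)"
  shows "((-7/9) + (2/9) * g + (-5/3) * g * p + (23/18) * g * p^2 + (59/9) * g * p^3 + (5) * g * p^4 + (10/9) * g * p^5 + (2/9) * g^2 * p + (-4/9) * g^2 * p^2 + (-2) * g^2 * p^3 + (-16/9) * g^2 * p^4 + (-4/9) * g^2 * p^5 + (4/9) * p + (5/9) * p^2 + (-16/9) * p^3 + (-14/9) * p^4 + (-4/9) * p^5) > 0"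
proof -
  define x where "x = p - (-1/2)"
  define y where "y = g - (12/5)"
  have x0: "0 \<le> x" and x1: "x \<le> (1/5)" using assms unfolding x_def by auto
  have y0: "0 \<le> y" and y1: "y \<le> (3/5)" using assms unfolding y_def by auto
  have f1: "x \<le> (1/5)"
  proof -
    have "x \<le> (1/5)" using x0 x1 y0 y1 by simp
    then show ?thesis by (simp add: power_divide)
  qed
  have f2: "x * y \<le> (3/25)"
  proof -
    have "x * y \<le> (1/5)*(3/5)" using x0 x1 y0 y1 by (intro mult_mono power_mono) simp_all
    then show ?thesis by (simp add: power_divide)
  qed
  have f3: "x * y^2 \<le> (9/125)"
  proof -
    have "x * y^2 \<le> (1/5)*(3/5)^2" using x0 x1 y0 y1 by (intro mult_mono power_mono) simp_all
    then show ?thesis by (simp add: power_divide)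
  qed
  have f4: "x^2 \<le> (1/25)"
  proof -
    have "x^2 \<le> (1/5)^2" using x0 x1 y0 y1 by (intro mult_mono power_mono) simp_all
    then show ?thesis by (simp add: power_divide)
  qed
  have f5: "x^2 * y \<le> (3/125)"
  proof -
    have "x^2 * y \<le> (1/5)^2*(3/5)" using x0 x1 y0 y1 by (intro mult_mono power_mono) simp_all
    then show ?thesis by (simp add: power_divide)
  qed
  have f6: "0 \<le> x^2 * y^2" using x0 y0 by simp
  have f7: "0 \<le> x^3" using x0 y0 by simp
  have f8: "0 \<le> x^3 * y" using x0 y0 by simp
  have f9: "0 \<le> x^3 * y^2" using x0 y0 by simp
  have f10: "0 \<le> x^4" using x0 y0 by simp
  have f11: "x^4 * y \<le> (3/3125)"
  proof -
    have "x^4 * y \<le> (1/5)^4*(3/5)" using x0 x1 y0 y1 by (intro mult_mono power_mono) simp_all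
    then show ?thesis by (simp add: power_divide)
  qed
  have f12: "x^4 * y^2 \<le> (9/15625)"
  proof -
    have "x^4 * y^2 \<le> (1/5)^4*(3/5)^2" using x0 x1 y0 y1 by (intro mult_mono power_mono) simp_all
    then show ?thesis by (simp add: power_divide)
  qed
  have f13: "x^5 \<le> (1/3125)"
  proof -
    have "x^5 \<le> (1/5)^5" using x0 x1 y0 y1 by (intro mult_mono power_mono) simp_all
    then show ?thesis by (simp add: power_divide)
  qed
  have f14: "x^5 * y \<le> (3/15625)"
  proof -
    have "x^5 * y \<le> (1/5)^5*(3/5)" using x0 x1 y0 y1 by (intro mult_mono power_mono) simp_all
    then show ?thesis by (simp add: power_divide)
  qed
  have f15: "x^5 * y^2 \<le> (9/78125)"
  proof -
    have "x^5 * y^2 \<le> (1/5)^5*(3/5)^2" using x0 x1 y0 y1 by (intro mult_mono power_mono) simp_all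
    then show ?thesis by (simp add: power_divide)
  qed
  have f16: "0 \<le> y" using x0 y0 by simp
  have f17: "y^2 \<le> (9/25)"
  proof -
    have "y^2 \<le> (3/5)^2" using x0 x1 y0 y1 by (intro mult_mono power_mono) simp_all
    then show ?thesis by (simp add: power_divide)
  qed
  have eq: "((-7/9) + (2/9) * g + (-5/3) * g * p + (23/18) * g * p^2 + (59/9) * g * p^3 + (5) * g * p^4 + (10/9) * g * p^5 + (2/9) * g^2 * p + (-4/9) * g^2 * p^2 + (-2) * g^2 * p^3 + (-16/9) * g^2 * p^4 + (-4/9) * g^2 * p^5 + (4/9) * p + (5/9) * p^2 + (-16/9) * p^3 + (-14/9) * p^4 + (-4/9) * p^5) = ((79/90) + (-1547/900) * x + (-209/360) * x * y + (-1/12) * x * y^2 + (-419/225) * x^2 + (-14/45) * x^2 * y + (4/9) * x^2 * y^2 + (266/225) * x^3 + (22/15) * x^3 * y + (4/9) * x^3 * y^2 + (236/225) * x^4 + (-44/45) * x^4 * y + (-2/3) * x^4 * y^2 + (-76/225) * x^5 + (-46/45) * x^5 * y + (-4/9) * x^5 * y^2 + (1/2) * y + (-5/72) * y^2)"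
    unfolding x_def y_def by algebra
  show ?thesis unfolding eq using f1 f2 f3 f4 f5 f6 f7 f8 f9 f10 f11 f12 f13 f14 f15 f16 f17 by linarith
qed

lemma dqneg2_p0:
  fixes V g z :: real
  assumes "(-33/100) \<le> V" and "V \<le> (-33/200)" and "(12/5) \<le> g" and "g \<le> (3)" and "(0) \<le> z" and "z \<le> (3/25)"
  shows "((-3/4) + (-15/2) * V + (12) * V * g + (12) * V * g * z + (-6) * V * g^2 * z + (-9/2) * V^2 + (9) * V^2 * g + (3) * g + (9) * g * z + (-3) * g^2 * z) > 0"
proof -
  define vv where "vv = V - (-33/100)"
  define yy where "yy = g - (12/5)"
  define tt where "tt = z - (0)"
  have vv0: "0 \<le> vv" and vv1: "vv \<le> (33/200)" using assms unfolding vv_def by auto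
  have yy0: "0 \<le> yy" and yy1: "yy \<le> (3/5)" using assms unfolding yy_def by auto
  have tt0: "0 \<le> tt" and tt1: "tt \<le> (3/25)" using assms unfolding tt_def by auto
  have f1: "0 \<le> tt" using vv0 yy0 tt0 by simp
  have f2: "tt * vv \<le> (99/5000)"
  proof -
    have "tt * vv \<le> (3/25)*(33/200)" using vv0 vv1 yy0 yy1 tt0 tt1 by (intro mult_mono power_mono) simp_all
    then show ?thesis by (simp add: power_divide)
  qed
  have f3: "tt * vv * yy \<le> (297/25000)"
  proof -
    have "tt * vv * yy \<le> (3/25)*(33/200)*(3/5)" using vv0 vv1 yy0 yy1 tt0 tt1 by (intro mult_mono power_mono) simp_all
    then show ?thesis by (simp add: power_divide)
  qed
  have f4: "tt * vv * yy^2 \<le> (891/125000)"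
  proof -
    have "tt * vv * yy^2 \<le> (3/25)*(33/200)*(3/5)^2" using vv0 vv1 yy0 yy1 tt0 tt1 by (intro mult_mono power_mono) simp_all
    then show ?thesis by (simp add: power_divide)
  qed
  have f5: "0 \<le> tt * yy" using vv0 yy0 tt0 by simp
  have f6: "tt * yy^2 \<le> (27/625)"
  proof -
    have "tt * yy^2 \<le> (3/25)*(3/5)^2" using vv0 vv1 yy0 yy1 tt0 tt1 by (intro mult_mono power_mono) simp_all
    then show ?thesis by (simp add: power_divide)
  qed
  have f7: "0 \<le> vv" using vv0 yy0 tt0 by simp
  have f8: "0 \<le> vv * yy" using vv0 yy0 tt0 by simp
  have f9: "0 \<le> vv^2" using vv0 yy0 tt0 by simp
  have f10: "0 \<le> vv^2 * yy" using vv0 yy0 tt0 by simp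
  have f11: "0 \<le> yy" using vv0 yy0 tt0 by simp
  have eq: "((-3/4) + (-15/2) * V + (12) * V * g + (12) * V * g * z + (-6) * V * g^2 * z + (-9/2) * V^2 + (9) * V^2 * g + (3) * g + (9) * g * z + (-3) * g^2 * z) = ((128319/100000) + (3888/625) * tt + (-144/25) * tt * vv + (-84/5) * tt * vv * yy + (-6) * tt * vv * yy^2 + (18/125) * tt * yy + (-51/50) * tt * yy^2 + (5007/500) * vv + (303/50) * vv * yy + (171/10) * vv^2 + (9) * vv^2 * yy + (201/10000) * yy)"
    unfolding vv_def yy_def tt_def by algebra
  show ?thesis unfolding eq using f1 f2 f3 f4 f5 f6 f7 f8 f9 f10 f11 by linarith
qed

lemma dqneg2_p1:
  fixes V g z :: real
  assumes "(-33/200) \<le> V" and "V \<le> (0)" and "(12/5) \<le> g" and "g \<le> (3)" and "(0) \<le> z" and "z \<le> (3/25)"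
  shows "((-3/4) + (-15/2) * V + (12) * V * g + (12) * V * g * z + (-6) * V * g^2 * z + (-9/2) * V^2 + (9) * V^2 * g + (3) * g + (9) * g * z + (-3) * g^2 * z) > 0"
proof -
  define vv where "vv = V - (-33/200)"
  define yy where "yy = g - (12/5)"
  define tt where "tt = z - (0)"
  have vv0: "0 \<le> vv" and vv1: "vv \<le> (33/200)" using assms unfolding vv_def by auto
  have yy0: "0 \<le> yy" and yy1: "yy \<le> (3/5)" using assms unfolding yy_def by auto
  have tt0: "0 \<le> tt" and tt1: "tt \<le> (3/25)" using assms unfolding tt_def by auto
  have f1: "0 \<le> tt" using vv0 yy0 tt0 by simp
  have f2: "tt * vv \<le> (99/5000)"
  proof -
    have "tt * vv \<le> (3/25)*(33/200)" using vv0 vv1 yy0 yy1 tt0 tt1 by (intro mult_mono power_mono) simp_all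
    then show ?thesis by (simp add: power_divide)
  qed
  have f3: "tt * vv * yy \<le> (297/25000)"
  proof -
    have "tt * vv * yy \<le> (3/25)*(33/200)*(3/5)" using vv0 vv1 yy0 yy1 tt0 tt1 by (intro mult_mono power_mono) simp_all
    then show ?thesis by (simp add: power_divide)
  qed
  have f4: "tt * vv * yy^2 \<le> (891/125000)"
  proof -
    have "tt * vv * yy^2 \<le> (3/25)*(33/200)*(3/5)^2" using vv0 vv1 yy0 yy1 tt0 tt1 by (intro mult_mono power_mono) simp_all
    then show ?thesis by (simp add: power_divide)
  qed
  have f5: "tt * yy \<le> (9/125)"
  proof -
    have "tt * yy \<le> (3/25)*(3/5)" using vv0 vv1 yy0 yy1 tt0 tt1 by (intro mult_mono power_mono) simp_all
    then show ?thesis by (simp add: power_divide)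
  qed
  have f6: "tt * yy^2 \<le> (27/625)"
  proof -
    have "tt * yy^2 \<le> (3/25)*(3/5)^2" using vv0 vv1 yy0 yy1 tt0 tt1 by (intro mult_mono power_mono) simp_all
    then show ?thesis by (simp add: power_divide)
  qed
  have f7: "0 \<le> vv" using vv0 yy0 tt0 by simp
  have f8: "0 \<le> vv * yy" using vv0 yy0 tt0 by simp
  have f9: "0 \<le> vv^2" using vv0 yy0 tt0 by simp
  have f10: "0 \<le> vv^2 * yy" using vv0 yy0 tt0 by simp
  have f11: "0 \<le> yy" using vv0 yy0 tt0 by simp
  have eq: "((-3/4) + (-15/2) * V + (12) * V * g + (12) * V * g * z + (-6) * V * g^2 * z + (-9/2) * V^2 + (9) * V^2 * g + (3) * g + (9) * g * z + (-3) * g^2 * z) = ((1360419/400000) + (3294/625) * tt + (-144/25) * tt * vv + (-84/5) * tt * vv * yy + (-6) * tt * vv * yy^2 + (-657/250) * tt * yy + (-201/100) * tt * yy^2 + (15657/1000) * vv + (903/100) * vv * yy + (171/10) * vv^2 + (9) * vv^2 * yy + (50601/40000) * yy)"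
    unfolding vv_def yy_def tt_def by algebra
  show ?thesis unfolding eq using f1 f2 f3 f4 f5 f6 f7 f8 f9 f10 f11 by linarith
qed

lemma dqneg2:
  fixes V g z :: real
  assumes "(-33/100) \<le> V" and "V \<le> (0)" and "(12/5) \<le> g" and "g \<le> (3)" and "(0) \<le> z" and "z \<le> (3/25)"
  shows "((-3/4) + (-15/2) * V + (12) * V * g + (12) * V * g * z + (-6) * V * g^2 * z + (-9/2) * V^2 + (9) * V^2 * g + (3) * g + (9) * g * z + (-3) * g^2 * z) > 0"
proof -
  consider "(-33/100) \<le> V \<and> V \<le> (-33/200)" | "(-33/200) \<le> V \<and> V \<le> (0)" using assms(1,2) by linarith
  then show ?thesis
  proof cases
    case 1 then show ?thesis using dqneg2_p0 assms by auto
  next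
    case 2 then show ?thesis using dqneg2_p1 assms by auto
  qed
qed

lemma qf2: "qf 2 g z V = ((-3/2) + (3/4) * V + (-3) * V * g + (-9) * V * g * z + (3) * V * g^2 * z + (15/4) * V^2 + (-6) * V^2 * g + (-6) * V^2 * g * z + (3) * V^2 * g^2 * z + (3/2) * V^3 + (-3) * V^3 * g + (-3) * g * z + (9) * z)"
  unfolding qf_def Pp_def lam_def a1_def a2_def a3_def
  by (simp add: field_simps power2_eq_square power3_eq_cube; simp add: algebra_simps)

lemma dqf2: "((\<lambda>V. qf 2 g z V) has_real_derivative ((3/4) + (15/2) * V + (-12) * V * g + (-12) * V * g * z + (6) * V * g^2 * z + (9/2) * V^2 + (-9) * V^2 * g + (-3) * g + (-9) * g * z + (3) * g^2 * z)) (at V)"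
  unfolding qf2 by (auto intro!: derivative_eq_intros simp: field_simps power2_eq_square power3_eq_cube)

lemma Tid2:
  fixes p g z :: real
  shows "((g-2)*p-2) * qf 2 g z (-(2/3)*(1+p)^2) - (2*p^2+7*p+2)*((7/9) + (-2/9) * g + (5/3) * g * p + (-23/18) * g * p^2 + (-59/9) * g * p^3 + (-5) * g * p^4 + (-10/9) * g * p^5 + (-2/9) * g^2 * p + (4/9) * g^2 * p^2 + (2) * g^2 * p^3 + (16/9) * g^2 * p^4 + (4/9) * g^2 * p^5 + (-4/9) * p + (-5/9) * p^2 + (16/9) * p^3 + (14/9) * p^4 + (4/9) * p^5)
     = (z*((g-2)*p-2) - p*(1+p)) * ((9) + (1/3) * g + (4/3) * g * p + (-10) * g * p^2 + (-32/3) * g * p^3 + (-8/3) * g * p^4 + (-2/3) * g^2 + (4/3) * g^2 * p + (6) * g^2 * p^2 + (16/3) * g^2 * p^3 + (4/3) * g^2 * p^4)"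
  unfolding qf2 by algebra

lemma qneg1:
  fixes g z p V :: real
  assumes g: "12/5 < g" "g \<le> 3" and z: "0 < z" "z < 3/25" and p: "-1/2 < p" "p < -3/10"
    and rel: "p^2 + (1 - (g-2)*z)*p + 2*z = 0" and p2: "2*p^2 + 7*p + 2 < 0"
    and V: "-(2/3)*(1+p)^2 < V" "V < 0"
  shows "qf 1 g z V < 0"
proof -
  define Vc where "Vc = -(2/3)*(1+p)^2"
  have sq: "(1+p)^2 \<le> (7/10)^2" using p by (intro power_mono) auto
  have Vclo: "-33/100 \<le> Vc" unfolding Vc_def using sq by (simp add: power2_eq_square)
  have VcV: "Vc < V" using V unfolding Vc_def by simp
  have dec: "qf 1 g z Vc > qf 1 g z V"
  proof (rule DERIV_neg_imp_decreasing[OF VcV])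
    fix x assume x: "Vc \<le> x" "x \<le> V"
    have "((3) + (3) * x + (6) * x * g + (6) * x * g * z + (-3) * x * g^2 * z + (9/2) * x^2 * g + (3/2) * g + (9/2) * g * z + (-3/2) * g^2 * z) > 0" by (rule dqneg1[of x g z]) (use x Vclo V g z in auto)
    then have "((-3) + (-3) * x + (-6) * x * g + (-6) * x * g * z + (3) * x * g^2 * z + (-9/2) * x^2 * g + (-3/2) * g + (-9/2) * g * z + (3/2) * g^2 * z) < 0" by linarith
    then show "\<exists>y. ((\<lambda>V. qf 1 g z V) has_real_derivative y) (at x) \<and> y < 0" using dqf1[of g z x] by blast
  qed
  have Qn0: "((-1/6) + (1/9) * g + (-17/18) * g * p + (10/9) * g * p^2 + (31/9) * g * p^3 + (20/9) * g * p^4 + (4/9) * g * p^5 + (1/9) * g^2 * p + (-2/9) * g^2 * p^2 + (-1) * g^2 * p^3 + (-8/9) * g^2 * p^4 + (-2/9) * g^2 * p^5 + (-1/2) * p + (-1) * p^2 + (-2/3) * p^3) > 0" by (rule Qneg1) (use p g in auto)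
  have Qn: "((1/6) + (-1/9) * g + (17/18) * g * p + (-10/9) * g * p^2 + (-31/9) * g * p^3 + (-20/9) * g * p^4 + (-4/9) * g * p^5 + (-1/9) * g^2 * p + (2/9) * g^2 * p^2 + (1) * g^2 * p^3 + (8/9) * g^2 * p^4 + (2/9) * g^2 * p^5 + (1/2) * p + (1) * p^2 + (2/3) * p^3) < 0" using Qn0 by linarith
  have zr: "z*((g-2)*p-2) - p*(1+p) = 0" using rel by (simp add: algebra_simps power2_eq_square)
  have T: "((g-2)*p-2) * qf 1 g z Vc = (2*p^2+7*p+2)*((1/6) + (-1/9) * g + (17/18) * g * p + (-10/9) * g * p^2 + (-31/9) * g * p^3 + (-20/9) * g * p^4 + (-4/9) * g * p^5 + (-1/9) * g^2 * p + (2/9) * g^2 * p^2 + (1) * g^2 * p^3 + (8/9) * g^2 * p^4 + (2/9) * g^2 * p^5 + (1/2) * p + (1) * p^2 + (2/3) * p^3)"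
    using Tid1[of g p z] zr unfolding Vc_def by simp
  have "(2*p^2+7*p+2)*((1/6) + (-1/9) * g + (17/18) * g * p + (-10/9) * g * p^2 + (-31/9) * g * p^3 + (-20/9) * g * p^4 + (-4/9) * g * p^5 + (-1/9) * g^2 * p + (2/9) * g^2 * p^2 + (1) * g^2 * p^3 + (8/9) * g^2 * p^4 + (2/9) * g^2 * p^5 + (1/2) * p + (1) * p^2 + (2/3) * p^3) > 0" using p2 Qn by (rule mult_neg_neg)
  then have "((g-2)*p-2) * qf 1 g z Vc > 0" using T by simp
  moreover have "(g-2)*p-2 < 0"
  proof -
    have "(g-2)*p \<le> 0" using g p by (intro mult_nonneg_nonpos) auto
    then show ?thesis by simp
  qed
  ultimately have "qf 1 g z Vc < 0" by (simp add: zero_less_mult_iff)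
  then show ?thesis using dec by simp
qed

lemma qneg2:
  fixes g z p V :: real
  assumes g: "12/5 < g" "g \<le> 3" and z: "0 < z" "z < 3/25" and p: "-1/2 < p" "p < -3/10"
    and rel: "p^2 + (1 - (g-2)*z)*p + 2*z = 0" and p2: "2*p^2 + 7*p + 2 < 0"
    and V: "-(2/3)*(1+p)^2 < V" "V < 0"
  shows "qf 2 g z V < 0"
proof -
  define Vc where "Vc = -(2/3)*(1+p)^2"
  have sq: "(1+p)^2 \<le> (7/10)^2" using p by (intro power_mono) auto
  have Vclo: "-33/100 \<le> Vc" unfolding Vc_def using sq by (simp add: power2_eq_square)
  have VcV: "Vc < V" using V unfolding Vc_def by simp
  have dec: "qf 2 g z Vc > qf 2 g z V"
  proof (rule DERIV_neg_imp_decreasing[OF VcV])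
    fix x assume x: "Vc \<le> x" "x \<le> V"
    have "((-3/4) + (-15/2) * x + (12) * x * g + (12) * x * g * z + (-6) * x * g^2 * z + (-9/2) * x^2 + (9) * x^2 * g + (3) * g + (9) * g * z + (-3) * g^2 * z) > 0" by (rule dqneg2[of x g z]) (use x Vclo V g z in auto)
    then have "((3/4) + (15/2) * x + (-12) * x * g + (-12) * x * g * z + (6) * x * g^2 * z + (9/2) * x^2 + (-9) * x^2 * g + (-3) * g + (-9) * g * z + (3) * g^2 * z) < 0" by linarith
    then show "\<exists>y. ((\<lambda>V. qf 2 g z V) has_real_derivative y) (at x) \<and> y < 0" using dqf2[of g z x] by blast
  qed
  have Qn0: "((-7/9) + (2/9) * g + (-5/3) * g * p + (23/18) * g * p^2 + (59/9) * g * p^3 + (5) * g * p^4 + (10/9) * g * p^5 + (2/9) * g^2 * p + (-4/9) * g^2 * p^2 + (-2) * g^2 * p^3 + (-16/9) * g^2 * p^4 + (-4/9) * g^2 * p^5 + (4/9) * p + (5/9) * p^2 + (-16/9) * p^3 + (-14/9) * p^4 + (-4/9) * p^5) > 0" by (rule Qneg2) (use p g in auto)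
  have Qn: "((7/9) + (-2/9) * g + (5/3) * g * p + (-23/18) * g * p^2 + (-59/9) * g * p^3 + (-5) * g * p^4 + (-10/9) * g * p^5 + (-2/9) * g^2 * p + (4/9) * g^2 * p^2 + (2) * g^2 * p^3 + (16/9) * g^2 * p^4 + (4/9) * g^2 * p^5 + (-4/9) * p + (-5/9) * p^2 + (16/9) * p^3 + (14/9) * p^4 + (4/9) * p^5) < 0" using Qn0 by linarith
  have zr: "z*((g-2)*p-2) - p*(1+p) = 0" using rel by (simp add: algebra_simps power2_eq_square)
  have T: "((g-2)*p-2) * qf 2 g z Vc = (2*p^2+7*p+2)*((7/9) + (-2/9) * g + (5/3) * g * p + (-23/18) * g * p^2 + (-59/9) * g * p^3 + (-5) * g * p^4 + (-10/9) * g * p^5 + (-2/9) * g^2 * p + (4/9) * g^2 * p^2 + (2) * g^2 * p^3 + (16/9) * g^2 * p^4 + (4/9) * g^2 * p^5 + (-4/9) * p + (-5/9) * p^2 + (16/9) * p^3 + (14/9) * p^4 + (4/9) * p^5)"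
    using Tid2[of g p z] zr unfolding Vc_def by simp
  have "(2*p^2+7*p+2)*((7/9) + (-2/9) * g + (5/3) * g * p + (-23/18) * g * p^2 + (-59/9) * g * p^3 + (-5) * g * p^4 + (-10/9) * g * p^5 + (-2/9) * g^2 * p + (4/9) * g^2 * p^2 + (2) * g^2 * p^3 + (16/9) * g^2 * p^4 + (4/9) * g^2 * p^5 + (-4/9) * p + (-5/9) * p^2 + (16/9) * p^3 + (14/9) * p^4 + (4/9) * p^5) > 0" using p2 Qn by (rule mult_neg_neg)
  then have "((g-2)*p-2) * qf 2 g z Vc > 0" using T by simp
  moreover have "(g-2)*p-2 < 0"
  proof -
    have "(g-2)*p \<le> 0" using g p by (intro mult_nonneg_nonpos) auto
    then show ?thesis by simp
  qed
  ultimately have "qf 2 g z Vc < 0" by (simp add: zero_less_mult_iff)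
  then show ?thesis using dec by simp
qed

lemma a1a2:
  fixes m g z :: real
  assumes "1 \<le> m" "m \<le> 2" "12/5 < g" "g \<le> 3" "0 < z"
  shows "a1 m g z > 0" "a2 m g z < a1 m g z"
proof -
  have mg: "m*(g-1) > 0" using assms by simp
  show "a1 m g z > 0" unfolding a1_def using mg by simp
  have "m*z*g*(g-3) \<le> 0" using assms by (simp add: mult_nonneg_nonpos)
  then show "a2 m g z < a1 m g z" unfolding a1_def a2_def by (simp add: field_simps)
qed

lemma Psid_pos:
  fixes m g z p V :: real
  assumes m: "1 \<le> m" "m \<le> 2" and g: "12/5 < g" "g \<le> 3" and z: "0 < z"
    and p: "-1/2 < p" "p \<le> V" "V < 0" and Ppp: "Pp m g z p > 0"
  shows "Psid m g z V > 0"
proof -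
  have A: "a1 m g z > 0" "a2 m g z < a1 m g z" using a1a2[OF m g z] by auto
  have w: "1+V+m*z > 0" using p m z by (simp add: add_pos_pos)
  have u: "1+V \<ge> 1/2" using p by simp
  have "a1 m g z*(1 + 2*V) \<ge> 0" using A u by simp
  then have "2*a1 m g z*(1+V) \<ge> a1 m g z" by (simp add: algebra_simps)
  then have Pd: "2*a1 m g z*(1+V) - a2 m g z > 0" using A by linarith
  have diff: "Pp m g z V - Pp m g z p = (V - p)*(a1 m g z*(2+V+p) - a2 m g z)"
    unfolding Pp_def by (simp add: algebra_simps power2_eq_square)
  have "a1 m g z*(1+V+p) \<ge> 0" using A p by simp
  then have "a1 m g z*(2+V+p) \<ge> a1 m g z" by (simp add: algebra_simps)
  then have "a1 m g z*(2+V+p) - a2 m g z \<ge> 0" using A by linarith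
  then have "Pp m g z V - Pp m g z p \<ge> 0" unfolding diff using p by simp
  then have PpV: "Pp m g z V > 0" using Ppp by simp
  have f1: "1 - m*z/(1+V+m*z) > 0" using w p by (simp add: field_simps)
  have f2: "m*z/(1+V+m*z)^2 \<ge> 0" using m z by simp
  have "Pp m g z V*(m*z/(1+V+m*z)^2) \<ge> 0" using PpV f2 by (intro mult_nonneg_nonneg) auto
  moreover have "(2*a1 m g z*(1+V) - a2 m g z)*(1 - m*z/(1+V+m*z)) > 0" using Pd f1 by (intro mult_pos_pos)
  ultimately show ?thesis unfolding Psid_def by simp
qed

lemma qneg:
  fixes m g z p V :: real
  assumes m: "m = 1 \<or> m = 2" and g: "12/5 < g" "g \<le> 3" and z: "0 < z" "z < 3/25" and p: "-1/2 < p" "p < -3/10"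
    and rel: "p^2 + (1 - (g-2)*z)*p + 2*z = 0" and p2: "2*p^2 + 7*p + 2 < 0"
    and V: "-(2/3)*(1+p)^2 < V" "V < 0"
  shows "qf m g z V < 0"
  using m qneg1[OF g z p rel p2 V] qneg2[OF g z p rel p2 V] by auto

theorem mainTheorem19:
  fixes m :: nat and g z :: real and C :: "real \<Rightarrow> real"
  assumes hm: "m = 1 \<or> m = 2"
    and hg: "gamma1 < g" "g \<le> 3"
    and hz: "z2 g < z" "z \<le> zM g"
    and hloc: "\<exists>\<epsilon>>0. \<exists>a::nat \<Rightarrow> real. a 0 = C8 g z \<and> a 1 = slope8 (real m) g z \<and>
                 (\<forall>V. \<bar>V - V8 g z\<bar> < \<epsilon> \<longrightarrow> (\<lambda>n. a n * (V - V8 g z)^n) sums C V)"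
    and hpos: "\<forall>V\<in>{V8 g z..<0}. C V > 0"
    and hode: "\<forall>V\<in>{V8 g z<..<0}. Gf (real m) g z V (C V) \<noteq> 0 \<and>
                 (C has_real_derivative Ff (real m) g z V (C V) / Gf (real m) g z V (C V)) (at V)"
  shows "(\<forall>V\<in>{V8 g z<..<0}. C V < sqrt (- (3/2) * V)) \<and> (C \<longlongrightarrow> 0) (at_left 0)"
proof -
  define mr where "mr = real m"
  have mr: "mr = 1 \<or> mr = 2" using hm unfolding mr_def by auto
  have mr12: "1 \<le> mr" "mr \<le> 2" using mr by auto
  note P = params[OF hg hz]
  define p where "p = V8 g z"
  have g1: "12/5 < g" and z0: "0 < z" and zb: "z < 3/25" using P by auto
  have rel: "p^2 + (1 - (g-2)*z)*p + 2*z = 0" using P unfolding p_def by auto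
  have pl: "-1/2 < p" and ph: "p < -3/10" and p2: "2*p^2 + 7*p + 2 < 0" using P unfolding p_def by auto
  have C8p: "C8 g z = 1 + p" unfolding C8_def p_def by simp
  obtain e a where e: "e > 0" and a0: "a 0 = C8 g z" and a1: "a 1 = slope8 mr g z"
    and sm: "\<forall>V. \<bar>V - p\<bar> < e \<longrightarrow> (\<lambda>n. a n * (V - p)^n) sums C V"
    using hloc unfolding p_def mr_def by blast
  have Cp: "C p = 1 + p" using powser_local(1)[OF e sm] a0 C8p by simp
  have slneg: "a 1 < 0" unfolding a1 by (rule slope_neg[OF mr12 g1 hg(2) z0 zb]) (use pl ph p_def in auto)
  have Cdp: "(C has_real_derivative a 1) (at p)" using powser_local(2)[OF e sm] .
  have Cpos: "\<And>V. p \<le> V \<Longrightarrow> V < 0 \<Longrightarrow> C V > 0" using hpos unfolding p_def by auto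
  have Gne: "\<And>V. p < V \<Longrightarrow> V < 0 \<Longrightarrow> Gf mr g z V (C V) \<noteq> 0" using hode unfolding p_def mr_def by auto
  have Cd: "\<And>V. p < V \<Longrightarrow> V < 0 \<Longrightarrow> (C has_real_derivative Ff mr g z V (C V) / Gf mr g z V (C V)) (at V)"
    using hode unfolding p_def mr_def by auto
  have Ccont: "\<And>V. p < V \<Longrightarrow> V < 0 \<Longrightarrow> isCont C V" using Cd DERIV_isCont by blast
  have Ccontp: "isCont C p" using Cdp DERIV_isCont by blast
  have u0: "\<And>V. p \<le> V \<Longrightarrow> 1 + V > 0" using pl by simp
  have mz: "mr*z > 0" using mr12 z0 by simp
  have w0: "\<And>V. p \<le> V \<Longrightarrow> 1 + V + mr*z > 0" using u0 mz by (simp add: add_pos_pos)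
  define GG where "GG = (\<lambda>V. Gf mr g z V (C V))"
  have GGcont: "\<And>V. p < V \<Longrightarrow> V < 0 \<Longrightarrow> isCont GG V"
    unfolding GG_def Gf_def by (intro continuous_intros Ccont) auto
  define V0 where "V0 = - mr*z/(mr+1)"
  have V0: "p < V0" "V0 < 0"
  proof -
    have "mr*z/(mr+1) \<le> 2*(3/25)/(1+1)"
      using mr12 z0 zb by (intro frac_le mult_mono) auto
    then show "p < V0" unfolding V0_def using ph by simp
    show "V0 < 0" unfolding V0_def using mz mr12 by simp
  qed
  have GV0: "GG V0 > 0"
  proof -
    have D: "(mr+1)*V0 + 2*mr*z = mr*z" unfolding V0_def using mr12 by (simp add: field_simps)
    have mgz: "mr*g*z > 0" using mr12 g1 z0 by simp
    have lam: "lam mr g z + V0 > 0" unfolding lam_def using V0 mgz pl by linarith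
    have "(C V0)^2 * (mr*z) > 0" using Cpos[of V0] V0 mz by simp
    moreover have "V0 * (1+V0) * (lam mr g z + V0) < 0" using V0 u0[of V0] lam
      by (simp add: mult_neg_pos)
    ultimately show ?thesis unfolding GG_def Gf_def D by simp
  qed
  have Gpos: "\<And>V. p < V \<Longrightarrow> V < 0 \<Longrightarrow> GG V > 0"
  proof (rule ccontr)
    fix V assume V: "p < V" "V < 0" and n: "\<not> GG V > 0"
    then have GVn: "GG V < 0" using Gne[of V] unfolding GG_def by force
    have "\<exists>x. min V V0 \<le> x \<and> x \<le> max V V0 \<and> GG x = 0"
    proof (cases "V \<le> V0")
      case True
      have "continuous_on {V..V0} GG" using GGcont V V0
        by (intro continuous_at_imp_continuous_on) auto
      then obtain x where "x \<ge> V" "x \<le> V0" "GG x = 0" using IVT'[of GG V 0 V0] GVn GV0 True by auto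
      then show ?thesis using True by auto
    next
      case False
      have "continuous_on {V0..V} GG" using GGcont V V0
        by (intro continuous_at_imp_continuous_on) auto
      then obtain x where "x \<ge> V0" "x \<le> V" "GG x = 0" using IVT2'[of GG V 0 V0] GVn GV0 False by auto
      then show ?thesis using False by auto
    qed
    then obtain x where x: "min V V0 \<le> x" "x \<le> max V V0" "GG x = 0" by blast
    have "p < x" "x < 0" using x V V0 by auto
    then show False using Gne x(3) unfolding GG_def by auto
  qed
  define E where "E = (\<lambda>V. (C V)^2 - Psi mr g z V)"
  have PsiP: "Psi mr g z p = (1+p)^2" by (rule I3[OF rel]) (use u0 w0 in auto)
  have Ep: "E p = 0" unfolding E_def PsiP Cp by simp
  have Ppp: "Pp mr g z p > 0"
  proof -
    have f: "1 - mr*z/(1+p+mr*z) > 0" using w0[of p] u0[of p] by (simp add: field_simps)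
    have "Pp mr g z p * (1 - mr*z/(1+p+mr*z)) > 0" using PsiP u0[of p] unfolding Psi_def by simp
    then show ?thesis using f by (simp add: zero_less_mult_iff)
  qed
  have Psidpos: "\<And>V. p \<le> V \<Longrightarrow> V < 0 \<Longrightarrow> Psid mr g z V > 0"
    using Psid_pos[OF mr12 g1 hg(2) z0 pl _ _ Ppp] by auto
  have Ed: "\<And>V. p < V \<Longrightarrow> V < 0 \<Longrightarrow> (E has_real_derivative
      2 * C V * (Ff mr g z V (C V) / Gf mr g z V (C V)) - Psid mr g z V) (at V)"
  proof -
    fix V assume V: "p < V" "V < 0"
    show "(E has_real_derivative 2 * C V * (Ff mr g z V (C V) / Gf mr g z V (C V)) - Psid mr g z V) (at V)"
      unfolding E_def using Cd[OF V] dPsi[OF w0[of V]] V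
      by (auto intro!: derivative_eq_intros)
  qed
  have Edp: "(E has_real_derivative 2 * C p * a 1 - Psid mr g z p) (at p)"
    unfolding E_def using Cdp dPsi[OF w0[of p]] by (auto intro!: derivative_eq_intros)
  have Edpneg: "2 * C p * a 1 - Psid mr g z p < 0"
  proof -
    have "C p * a 1 < 0" using Cp u0[of p] slneg by (simp add: mult_pos_neg)
    then show ?thesis using Psidpos[of p] ph by simp
  qed
  have Fform: "\<And>V. p < V \<Longrightarrow> V < 0 \<Longrightarrow> Ff mr g z V (C V) = C V * ((1+V+mr*z)/(1+V)) * E V"
    unfolding E_def using I1 u0 w0 by (simp add: less_imp_le)
  have Eneg: "\<forall>x. p < x \<and> x < 0 \<longrightarrow> E x < 0"
  proof (rule barrier[where f' = "\<lambda>V. 2 * C V * (Ff mr g z V (C V) / Gf mr g z V (C V)) - Psid mr g z V"])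
    show "p < 0" using ph by simp
    show "\<And>x. p < x \<Longrightarrow> x < 0 \<Longrightarrow> (E has_real_derivative 2 * C x * (Ff mr g z x (C x) / Gf mr g z x (C x)) - Psid mr g z x) (at x)"
      using Ed by blast
    show "\<And>x. p < x \<Longrightarrow> x < 0 \<Longrightarrow> E x = 0 \<Longrightarrow> 2 * C x * (Ff mr g z x (C x) / Gf mr g z x (C x)) - Psid mr g z x < 0"
      using Fform Psidpos by auto
    obtain d where d: "d > 0" "\<forall>h>0. h < d \<longrightarrow> E p > E (p + h)"
      using DERIV_neg_dec_right[OF Edp Edpneg] by blast
    show "\<exists>d>0. \<forall>x. p < x \<and> x < p + d \<longrightarrow> E x < 0"
    proof (intro exI[of _ d] conjI allI impI)
      show "d > 0" by fact
      fix x assume "p < x \<and> x < p + d"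
      then have "E p > E (p + (x - p))" using d(2)[rule_format, of "x - p"] by simp
      then show "E x < 0" using Ep by simp
    qed
  qed
  have Cdneg: "\<And>V. p < V \<Longrightarrow> V < 0 \<Longrightarrow> Ff mr g z V (C V) / Gf mr g z V (C V) < 0"
  proof -
    fix V assume V: "p < V" "V < 0"
    have "(1+V+mr*z)/(1+V) > 0" using u0[of V] w0[of V] V by simp
    then have "C V * ((1+V+mr*z)/(1+V)) > 0" using Cpos[of V] V by (intro mult_pos_pos) auto
    then have "C V * ((1+V+mr*z)/(1+V)) * E V < 0" using Eneg V by (intro mult_pos_neg) auto
    then have "Ff mr g z V (C V) < 0" using Fform[OF V] by simp
    moreover have "Gf mr g z V (C V) > 0" using Gpos[OF V] unfolding GG_def .
    ultimately show "Ff mr g z V (C V) / Gf mr g z V (C V) < 0" by (simp add: divide_neg_pos)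
  qed
  have Cdec: "\<And>V. p < V \<Longrightarrow> V < 0 \<Longrightarrow> C V < 1 + p"
  proof -
    fix V assume V: "p < V" "V < 0"
    have "C p > C V"
    proof (rule DERIV_neg_imp_decreasing[OF V(1)])
      fix x assume x: "p \<le> x" "x \<le> V"
      show "\<exists>y. (C has_real_derivative y) (at x) \<and> y < 0"
      proof (cases "x = p")
        case True then show ?thesis using Cdp slneg by blast
      next
        case False
        then have "p < x" "x < 0" using x V by auto
        then show ?thesis using Cd Cdneg by blast
      qed
    qed
    then show "C V < 1 + p" using Cp by simp
  qed
  define H where "H = (\<lambda>V. (C V)^2 + 3/2 * V)"
  have Hd: "\<And>V. p < V \<Longrightarrow> V < 0 \<Longrightarrow> (H has_real_derivative
      2 * C V * (Ff mr g z V (C V) / Gf mr g z V (C V)) + 3/2) (at V)"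
  proof -
    fix V assume V: "p < V" "V < 0"
    show "(H has_real_derivative 2 * C V * (Ff mr g z V (C V) / Gf mr g z V (C V)) + 3/2) (at V)"
      unfolding H_def using Cd[OF V] by (auto intro!: derivative_eq_intros)
  qed
  have Hp: "H p < 0" unfolding H_def Cp using p2 by (simp add: power2_eq_square algebra_simps)
  have Hcont: "isCont H p" unfolding H_def by (intro continuous_intros Ccontp)
  have Hneg: "\<forall>x. p < x \<and> x < 0 \<longrightarrow> H x < 0"
  proof (rule barrier[where f' = "\<lambda>V. 2 * C V * (Ff mr g z V (C V) / Gf mr g z V (C V)) + 3/2"])
    show "p < 0" using ph by simp
    show "\<And>x. p < x \<Longrightarrow> x < 0 \<Longrightarrow> (H has_real_derivative 2 * C x * (Ff mr g z x (C x) / Gf mr g z x (C x)) + 3/2) (at x)"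
      using Hd by blast
    show "\<And>x. p < x \<Longrightarrow> x < 0 \<Longrightarrow> H x = 0 \<Longrightarrow> 2 * C x * (Ff mr g z x (C x) / Gf mr g z x (C x)) + 3/2 < 0"
    proof -
      fix x assume x: "p < x" "x < 0" and Hx: "H x = 0"
      have cc: "(C x)^2 = -3/2*x" using Hx unfolding H_def by simp
      have Gx: "Gf mr g z x (C x) > 0" using Gpos[OF x] unfolding GG_def .
      have "C x < 1 + p" using Cdec[OF x] .
      then have "(C x)^2 < (1+p)^2" using Cpos[of x] x by (intro power_strict_mono) auto
      then have xgt: "-(2/3)*(1+p)^2 < x" using cc by simp
      have q: "qf mr g z x < 0" by (rule qneg[OF mr g1 hg(2) z0 zb pl ph rel p2 xgt x(2)])
      have "(1+x)*(2*C x*Ff mr g z x (C x) + 3/2*Gf mr g z x (C x)) = -x * qf mr g z x"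
        by (rule I2[OF u0 cc]) (use x in simp)
      moreover have "-x * qf mr g z x < 0" using q x by (intro mult_pos_neg) auto
      ultimately have "(1+x)*(2*C x*Ff mr g z x (C x) + 3/2*Gf mr g z x (C x)) < 0" by simp
      then have num: "2*C x*Ff mr g z x (C x) + 3/2*Gf mr g z x (C x) < 0"
        using u0[of x] x by (simp add: mult_less_0_iff)
      have "2 * C x * (Ff mr g z x (C x) / Gf mr g z x (C x)) + 3/2
          = (2*C x*Ff mr g z x (C x) + 3/2*Gf mr g z x (C x)) / Gf mr g z x (C x)"
        using Gx by (simp add: field_simps)
      also have "\<dots> < 0" using num Gx by (simp add: divide_neg_pos)
      finally show "2 * C x * (Ff mr g z x (C x) / Gf mr g z x (C x)) + 3/2 < 0" .
    qed
    have "H \<midarrow>p\<rightarrow> H p" using Hcont by (simp add: isCont_def)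
    then obtain r where r: "r > 0" "\<forall>x. x \<noteq> p \<and> \<bar>p - x\<bar> < r \<longrightarrow> H x < 0"
      using LIM_fun_less_zero[OF _ Hp] by blast
    show "\<exists>d>0. \<forall>x. p < x \<and> x < p + d \<longrightarrow> H x < 0"
      using r by (intro exI[of _ r]) auto
  qed
  have bound: "\<forall>V\<in>{V8 g z<..<0}. C V < sqrt (- (3/2) * V)"
  proof
    fix V assume "V \<in> {V8 g z<..<0}"
    then have V: "p < V" "V < 0" unfolding p_def by auto
    have "(C V)^2 < - (3/2) * V" using Hneg V unfolding H_def by auto
    then have "sqrt ((C V)^2) < sqrt (- (3/2) * V)" by (rule real_sqrt_less_mono)
    then show "C V < sqrt (- (3/2) * V)" using Cpos[of V] V by simp
  qed
  have lim: "(C \<longlongrightarrow> 0) (at_left 0)"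
  proof (rule tendsto_sandwich[where f = "\<lambda>_. 0" and h = "\<lambda>V. sqrt (- (3/2) * V)"])
    have ev: "eventually (\<lambda>V. V \<in> {p<..<0}) (at_left (0::real))"
      using eventually_at_left_real[of p 0] ph by simp
    show "eventually (\<lambda>V. 0 \<le> C V) (at_left 0)"
      using ev by eventually_elim (use Cpos in \<open>auto simp: less_imp_le\<close>)
    show "eventually (\<lambda>V. C V \<le> sqrt (- (3/2) * V)) (at_left 0)"
      using ev by eventually_elim (use bound p_def in \<open>auto simp: less_imp_le\<close>)
    show "((\<lambda>_. 0) \<longlongrightarrow> (0::real)) (at_left 0)" by simp
    have "((\<lambda>V. sqrt (- (3/2) * V)) \<longlongrightarrow> sqrt (- (3/2) * 0)) (at_left (0::real))"
      by (intro tendsto_intros)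
    then show "((\<lambda>V. sqrt (- (3/2) * V)) \<longlongrightarrow> 0) (at_left (0::real))" by simp
  qed
  show ?thesis using bound lim by blast
qed

end
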